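(* Assume there is $\delta>0$ such that $\alpha\big(\{((p_i)_{i\in\mathbb N_0},h)\in\Omega: p_1=1\}\big)<1$ and $\alpha\big(\{((p_i)_{i\in\mathbb N_0},h)\in\Omega: p_0\le 1-\delta,\ h\in[\delta,1]\}\big)=1$. Then either there is Local Survival for $\mathsf P$-a.e. $\omega$, or there is no Local Survival for $\mathsf P$-a.e. $\omega$. Moreover, there is Local Survival for $\mathsf P$-a.e. $\omega$ if and only if $\Lambda>1$.
   Context: Let $\mathcal M$ be the set of probability measures $(p_i)_{i\in\mathbb N_0}$ on $\mathbb N_0$ (offspring distributions) and $\Omega=\mathcal M\times(0,1]$. Let $\alpha$ be a probability measure on $\Omega$. A random environment $\omega=(\omega_x)_{x\in\mathbb N_0}=(\mu_x,h_x)_{x\in\mathbb N_0}$ is an i.i.d. sequence with law $\alpha$; write $\mathsf P=\alpha^{\otimes\mathbb N_0}$ and $\mathsf E$ for its expectation. Let $m_x=\sum_{k\ge0}k\,\mu_x(\{k\})$ be the mean offspring at $x$, $M=\operatorname{ess\,sup} m_0$ and $\Lambda=\operatorname{ess\,sup}\big(m_0(1-h_0)\big)$. Given $\omega$, the branching random walk in random environment on $\mathbb N_0$ evolves in discrete time as follows: at each time step every existing particle at a site $x$ produces offspring according to $\mu_x$, independently of all other particles, and dies; then every newly produced particle independently moves from $x$ to $x+1$ with probability $h_x$ and stays at $x$ with probability $1-h_x$. Let $\eta_n(x)$ be the number of particles at $x$ at time $n$ and $Z_n=\sum_x\eta_n(x)$. $P^x_\omega$, $E^x_\omega$ denote the (quenched)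 law and expectation of the process in environment $\omega$ started with one particle at $x$, and $P_\omega=P^0_\omega$, $E_\omega=E^0_\omega$. Given $\omega$, there is Global Survival (GS) if $P_\omega(Z_n\to0)<1$, and Local Survival (LS) if $P_\omega(\eta_n(x)\to0)<1$ for some $x\in\mathbb N_0$. *)

theory Defs
  imports "HOL-Probability.Probability"
begin

text \<open>A site parameter is a pair (p, h): p the offspring probability vector, h the
  probability of moving to the right. The parameter set Omega:\<close>

type_synonym site = "(nat \<Rightarrow> real) \<times> real"
type_synonym env = "nat \<Rightarrow> site"

definition Omega :: "site set" where
  "Omega = {(p, h). (\<forall>i. 0 \<le> p i) \<and> p sums 1 \<and> 0 < h \<and> h \<le> 1}"

definition offspring :: "(nat \<Rightarrow> real) \<Rightarrow> nat pmf" where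
  "offspring p = embed_pmf p"

definition mean_offspring :: "(nat \<Rightarrow> real) \<Rightarrow> ennreal" where
  "mean_offspring p = (\<Sum>k. ennreal (real k * p k))"

text \<open>Reproduction-and-move step of a single particle at a site with parameter (p, h):
  returns (number of children staying, number of children moving right).\<close>
definition particle_law :: "site \<Rightarrow> (nat \<times> nat) pmf" where
  "particle_law s = bind_pmf (offspring (fst s))
      (\<lambda>L. map_pmf (\<lambda>k. (L - k, k)) (binomial_pmf L (snd s)))"

text \<open>Independent randomness: for every time n, site x and particle label j,
  an independent sample of particle_law (omega x).  Quenched law in environment omega.\<close>
definition noise :: "env \<Rightarrow> (nat \<times> nat \<times> nat \<Rightarrow> nat \<times> nat) measure" where
  "noise \<omega> = (\<Pi>\<^sub>M i\<in>UNIV. measure_pmf (particle_law (\<omega> (fst (snd i)))))"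

text \<open>Particle numbers eta n x, starting with one particle at site 0.
  The particles at site x at time n are labelled 0, ..., eta n x - 1.\<close>
fun eta :: "(nat \<times> nat \<times> nat \<Rightarrow> nat \<times> nat) \<Rightarrow> nat \<Rightarrow> nat \<Rightarrow> nat" where
  "eta \<xi> 0 x = (if x = 0 then 1 else 0)"
| "eta \<xi> (Suc n) x =
     (\<Sum>j<eta \<xi> n x. fst (\<xi> (n, x, j)))
     + (if x = 0 then 0 else (\<Sum>j<eta \<xi> n (x - 1). snd (\<xi> (n, x - 1, j))))"

definition local_survival :: "env \<Rightarrow> bool" where
  "local_survival \<omega> \<longleftrightarrow>
     (\<exists>x. measure (noise \<omega>) {\<xi> \<in> space (noise \<omega>). (\<lambda>n. real (eta \<xi> n x)) \<longlonglongrightarrow> 0} < 1)"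

definition env_law :: "site measure \<Rightarrow> env measure" where
  "env_law \<alpha> = (\<Pi>\<^sub>M x\<in>UNIV. \<alpha>)"

definition Lambda :: "site measure \<Rightarrow> ennreal" where
  "Lambda \<alpha> = esssup \<alpha> (\<lambda>(p, h). mean_offspring p * ennreal (1 - h))"

end

theory Submission imports Defs begin

definition mrg :: "'i set \<Rightarrow> ('i \<Rightarrow> 'b) \<Rightarrow> ('i \<Rightarrow> 'b) \<Rightarrow> 'i \<Rightarrow> 'b" where
  "mrg A a b = (\<lambda>i. if i \<in> A then a i else b i)"

abbreviation PP :: "('i \<Rightarrow> 'b pmf) \<Rightarrow> ('i \<Rightarrow> 'b) measure" where
  "PP D \<equiv> PiM UNIV (\<lambda>i. measure_pmf (D i))"

lemma space_PP[simp]: "space (PP D) = UNIV"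
  by (auto simp: space_PiM)

lemma prob_space_PP: "prob_space (PP D)"
  by (intro prob_space_PiM prob_space_measure_pmf)

lemma coord_meas[measurable]: "(\<lambda>\<xi>. \<xi> i) \<in> PP D \<rightarrow>\<^sub>M count_space UNIV"
  using measurable_component_singleton[of i UNIV "\<lambda>i. measure_pmf (D i)"] by simp

lemma coord_set[measurable]: "{\<xi>. \<xi> i \<in> X} \<in> sets (PP D)"
  using measurable_sets[OF coord_meas[of i D], of X] by (simp add: vimage_def)

lemma mrg_meas: "(\<lambda>(a, b). mrg A a b) \<in> PP D \<Otimes>\<^sub>M PP D \<rightarrow>\<^sub>M PP D"
proof -
  have eq: "(\<lambda>(a, b). mrg A a b) = (\<lambda>\<omega> i. (if i \<in> A then fst \<omega> i else snd \<omega> i))"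
    by (auto simp: mrg_def fun_eq_iff)
  have "(\<lambda>\<omega> i. (if i \<in> A then fst \<omega> i else snd \<omega> i)) \<in> PP D \<Otimes>\<^sub>M PP D \<rightarrow>\<^sub>M PP D"
  proof (rule measurable_PiM_single')
    fix i :: 'a
    show "(\<lambda>\<omega>. if i \<in> A then fst \<omega> i else snd \<omega> i) \<in> PP D \<Otimes>\<^sub>M PP D \<rightarrow>\<^sub>M measure_pmf (D i)"
      unfolding measurable_pmf_measure2
      by (cases "i \<in> A") (simp_all add: measurable_compose[OF measurable_fst coord_meas] measurable_compose[OF measurable_snd coord_meas])
  qed auto
  then show ?thesis by (simp add: eq)
qed

lemma split_distr: "distr (PP D \<Otimes>\<^sub>M PP D) (PP D) (\<lambda>(a, b). mrg A a b) = PP D"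
proof -
  interpret product_prob_space "\<lambda>i. measure_pmf (D i)" UNIV
    by unfold_locales

  show ?thesis
  proof (rule PiM_eq)
    fix J :: "'a set" and F
    assume J: "finite J" "J \<subseteq> UNIV" and F: "\<And>j. j \<in> J \<Longrightarrow> F j \<in> sets (measure_pmf (D j))"
    have pre: "(\<lambda>(a, b). mrg A a b) -` prod_emb UNIV (\<lambda>i. measure_pmf (D i)) J (Pi\<^sub>E J F) \<inter> space (PP D \<Otimes>\<^sub>M PP D)
      = {a\<in>space (PP D). \<forall>j\<in>J \<inter> A. a j \<in> F j} \<times> {b\<in>space (PP D). \<forall>j\<in>J - A. b j \<in> F j}"
      by (auto simp: prod_emb_def space_pair_measure mrg_def PiE_iff split: if_splits)
    have "emeasure (distr (PP D \<Otimes>\<^sub>M PP D) (PP D) (\<lambda>(a, b). mrg A a b)) (prod_emb UNIV (\<lambda>i. measure_pmf (D i)) J (Pi\<^sub>E J F))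
      = emeasure (PP D \<Otimes>\<^sub>M PP D) ({a\<in>space (PP D). \<forall>j\<in>J \<inter> A. a j \<in> F j} \<times> {b\<in>space (PP D). \<forall>j\<in>J - A. b j \<in> F j})"
      unfolding pre[symmetric] by (rule emeasure_distr[OF mrg_meas]) (auto intro!: sets_PiM_I_finite J)
    also have "\<dots> = emeasure (PP D) {a\<in>space (PP D). \<forall>j\<in>J \<inter> A. a j \<in> F j} * emeasure (PP D) {b\<in>space (PP D). \<forall>j\<in>J - A. b j \<in> F j}"
    proof (rule P.emeasure_pair_measure_Times)
      show "{a \<in> space (PP D). \<forall>j\<in>J \<inter> A. a j \<in> F j} \<in> sets (PP D)"
        using J by (intro sets.sets_Collect_finite_All) (auto simp: coord_set)
      show "{b \<in> space (PP D). \<forall>j\<in>J - A. b j \<in> F j} \<in> sets (PP D)"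
        using J by (intro sets.sets_Collect_finite_All) (auto simp: coord_set)
    qed
    also have "\<dots> = (\<Prod>j\<in>J \<inter> A. emeasure (measure_pmf (D j)) (F j)) * (\<Prod>j\<in>J - A. emeasure (measure_pmf (D j)) (F j))"
    proof -
      have e1: "emeasure (PP D) {a\<in>space (PP D). \<forall>j\<in>J \<inter> A. a j \<in> F j} = (\<Prod>j\<in>J \<inter> A. emeasure (measure_pmf (D j)) (F j))"
        by (rule emeasure_PiM_Collect) (use J in auto)
      have e2: "emeasure (PP D) {a\<in>space (PP D). \<forall>j\<in>J - A. a j \<in> F j} = (\<Prod>j\<in>J - A. emeasure (measure_pmf (D j)) (F j))"
        by (rule emeasure_PiM_Collect) (use J in auto)
      show ?thesis by (simp only: e1 e2)
    qed
    also have "\<dots> = (\<Prod>j\<in>J. emeasure (measure_pmf (D j)) (F j))"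
      using J by (subst prod.union_disjoint[symmetric]) (auto intro!: prod.cong)
    finally show "emeasure (distr (PP D \<Otimes>\<^sub>M PP D) (PP D) (\<lambda>(a, b). mrg A a b)) (prod_emb UNIV (\<lambda>i. measure_pmf (D i)) J (Pi\<^sub>E J F)) = (\<Prod>j\<in>J. emeasure (measure_pmf (D j)) (F j))" .
  qed simp
qed

lemma split_nn_integral:
  assumes [measurable]: "\<Phi> \<in> borel_measurable (PP D)"
  shows "(\<integral>\<^sup>+\<xi>. \<Phi> \<xi> \<partial>PP D) = (\<integral>\<^sup>+a. \<integral>\<^sup>+b. \<Phi> (mrg A a b) \<partial>PP D \<partial>PP D)"
proof -
  interpret product_prob_space "\<lambda>i. measure_pmf (D i)" UNIV
    by unfold_locales

  have m: "(\<lambda>(a, b). mrg A a b) \<in> PP D \<Otimes>\<^sub>M PP D \<rightarrow>\<^sub>M PP D" by (rule mrg_meas)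
  have "(\<integral>\<^sup>+\<xi>. \<Phi> \<xi> \<partial>PP D) = (\<integral>\<^sup>+\<xi>. \<Phi> \<xi> \<partial>distr (PP D \<Otimes>\<^sub>M PP D) (PP D) (\<lambda>(a, b). mrg A a b))"
    by (simp add: split_distr)
  also have "\<dots> = (\<integral>\<^sup>+z. \<Phi> ((\<lambda>(a, b). mrg A a b) z) \<partial>(PP D \<Otimes>\<^sub>M PP D))"
    by (rule nn_integral_distr[OF m]) simp
  also have "\<dots> = (\<integral>\<^sup>+a. \<integral>\<^sup>+b. \<Phi> (mrg A a b) \<partial>PP D \<partial>PP D)"
    by (subst P.nn_integral_fst[symmetric]) (auto intro!: measurable_compose[OF m])
  finally show ?thesis .
qed

definition dep_on :: "'i set \<Rightarrow> (('i \<Rightarrow> 'b) \<Rightarrow> 'c) \<Rightarrow> bool" where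
  "dep_on A F \<longleftrightarrow> (\<forall>\<xi> \<xi>'. (\<forall>i\<in>A. \<xi> i = \<xi>' i) \<longrightarrow> F \<xi> = F \<xi>')"

lemma dep_on_mrg1: "dep_on A F \<Longrightarrow> F (mrg A a b) = F a"
  unfolding dep_on_def by (auto simp: mrg_def)

lemma dep_on_mrg2: "dep_on (- A) F \<Longrightarrow> F (mrg A a b) = F b"
  unfolding dep_on_def by (auto simp: mrg_def)

lemma factor_nn_integral:
  assumes [measurable]: "F \<in> borel_measurable (PP D)" "H \<in> borel_measurable (PP D)"
    and "dep_on A F" "dep_on (- A) H"
  shows "(\<integral>\<^sup>+\<xi>. F \<xi> * H \<xi> \<partial>PP D) = (\<integral>\<^sup>+\<xi>. F \<xi> \<partial>PP D) * (\<integral>\<^sup>+\<xi>. H \<xi> \<partial>PP D)"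
proof -
  have "(\<integral>\<^sup>+\<xi>. F \<xi> * H \<xi> \<partial>PP D) = (\<integral>\<^sup>+a. \<integral>\<^sup>+b. F a * H b \<partial>PP D \<partial>PP D)"
    using assms by (subst split_nn_integral[of _ _ A]) (auto simp: dep_on_mrg1 dep_on_mrg2)
  also have "\<dots> = (\<integral>\<^sup>+a. F a * (\<integral>\<^sup>+b. H b \<partial>PP D) \<partial>PP D)"
    by (subst nn_integral_cmult) auto
  also have "\<dots> = (\<integral>\<^sup>+\<xi>. F \<xi> \<partial>PP D) * (\<integral>\<^sup>+\<xi>. H \<xi> \<partial>PP D)"
    by (subst nn_integral_multc) auto
  finally show ?thesis .
qed

lemma coord_nn_integral: "(\<integral>\<^sup>+\<xi>. g (\<xi> i) \<partial>PP D) = (\<integral>\<^sup>+z. g z \<partial>measure_pmf (D i))"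
proof -
  interpret product_prob_space "\<lambda>i. measure_pmf (D i)" UNIV
    by unfold_locales
  have "(\<integral>\<^sup>+z. g z \<partial>measure_pmf (D i)) = (\<integral>\<^sup>+z. g z \<partial>distr (PP D) (measure_pmf (D i)) (\<lambda>\<xi>. \<xi> i))"
    by (simp add: PiM_component)
  also have "\<dots> = (\<integral>\<^sup>+\<xi>. g (\<xi> i) \<partial>PP D)"
    by (rule nn_integral_distr) auto
  finally show ?thesis ..
qed

definition pgf2 :: "site \<Rightarrow> real \<Rightarrow> real \<Rightarrow> real" where
  "pgf2 s u v = (\<Sum>L. fst s L * (snd s * v + (1 - snd s) * u) ^ L)"

lemma Omega_D: assumes "(p, h) \<in> Omega"
  shows "\<And>i. 0 \<le> p i" "p sums 1" "0 < h" "h \<le> 1"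
  using assms by (auto simp: Omega_def)

lemma pmf_offspring: assumes "(p, h) \<in> Omega" shows "pmf (offspring p) L = p L"
proof -
  have "(\<integral>\<^sup>+x. ennreal (p x) \<partial>count_space UNIV) = 1"
    using Omega_D[OF assms] by (simp add: nn_integral_count_space_nat suminf_ennreal_eq sums_unique[symmetric])
  then show ?thesis unfolding offspring_def
    using Omega_D[OF assms] by (subst pmf_embed_pmf) auto
qed

lemma binom_pgf:
  assumes h: "0 \<le> h" "h \<le> 1" and uv: "0 \<le> u" "0 \<le> v"
  shows "(\<integral>\<^sup>+k. ennreal (u ^ (L - k) * v ^ k) \<partial>binomial_pmf L h) = ennreal ((h * v + (1 - h) * u) ^ L)"
proof -
  have "(\<integral>\<^sup>+k. ennreal (u ^ (L - k) * v ^ k) \<partial>binomial_pmf L h) =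
    (\<Sum>k\<le>L. ennreal (u ^ (L - k) * v ^ k) * pmf (binomial_pmf L h) k)"
    using h by (intro nn_integral_measure_pmf_support) (auto simp: set_pmf_binomial_eq split: if_splits)
  also have "\<dots> = (\<Sum>k\<le>L. ennreal (real (L choose k) * (h * v) ^ k * ((1 - h) * u) ^ (L - k)))"
    using h uv by (intro sum.cong refl) (auto simp: ennreal_mult'[symmetric] power_mult_distrib mult_ac)
  also have "\<dots> = ennreal (\<Sum>k\<le>L. real (L choose k) * (h * v) ^ k * ((1 - h) * u) ^ (L - k))"
    using h uv by (intro sum_ennreal) auto
  also have "\<dots> = ennreal ((h * v + (1 - h) * u) ^ L)"
    by (subst binomial_ring) (simp add: atLeast0AtMost)
  finally show ?thesis .
qed

lemma pgf2_summable:
  assumes "(p, h) \<in> Omega" "0 \<le> t" "t \<le> 1"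
  shows "summable (\<lambda>L. p L * t ^ L)"
proof (rule summable_comparison_test[of _ p])
  show "summable p" using Omega_D(2)[OF assms(1)] by (rule sums_summable)
  show "\<exists>N. \<forall>n\<ge>N. norm (p n * t ^ n) \<le> p n"
    using Omega_D(1)[OF assms(1)] assms(2,3)
    by (auto intro!: exI[of _ 0] mult_left_le power_le_one simp: abs_mult)
qed

lemma pgf2_law:
  assumes s: "(p, h) \<in> Omega" and uv: "0 \<le> u" "u \<le> 1" "0 \<le> v" "v \<le> 1"
  shows "(\<integral>\<^sup>+z. ennreal (u ^ fst z * v ^ snd z) \<partial>particle_law (p, h)) = ennreal (pgf2 (p, h) u v)"
proof -
  note O = Omega_D[OF s]
  define t where "t = h * v + (1 - h) * u"
  have t: "0 \<le> t" "t \<le> 1"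
  proof -
    show "0 \<le> t" using O uv by (simp add: t_def)
    have "t \<le> h * 1 + (1 - h) * 1" unfolding t_def using O uv
      by (intro add_mono mult_left_mono) auto
    then show "t \<le> 1" by simp
  qed
  have "(\<integral>\<^sup>+z. ennreal (u ^ fst z * v ^ snd z) \<partial>particle_law (p, h)) =
     (\<integral>\<^sup>+L. ennreal (t ^ L) \<partial>offspring p)"
    unfolding particle_law_def using O uv
    by (simp add: binom_pgf t_def)
  also have "\<dots> = (\<integral>\<^sup>+L. ennreal (p L * t ^ L) \<partial>count_space UNIV)"
    unfolding nn_integral_measure_pmf using O t
    by (intro nn_integral_cong) (simp add: pmf_offspring[OF s] ennreal_mult')
  also have "\<dots> = ennreal (\<Sum>L. p L * t ^ L)"
    using O t by (simp add: nn_integral_count_space_nat suminf_ennreal2 pgf2_summable[OF s])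
  finally show ?thesis by (simp add: pgf2_def t_def)
qed

definition Fp :: "(nat \<Rightarrow> real) \<Rightarrow> real \<Rightarrow> real" where
  "Fp p t = (\<Sum>L. p L * t ^ L)"

definition phi :: "site \<Rightarrow> real \<Rightarrow> real" where
  "phi s u = pgf2 s u 1"

lemma phi_Fp: "phi (p, h) u = Fp p (h + (1 - h) * u)"
  by (simp add: phi_def pgf2_def Fp_def)

lemma t_ge: "0 \<le> h \<Longrightarrow> h \<le> 1 \<Longrightarrow> 0 \<le> u \<Longrightarrow> 0 \<le> h + (1 - h) * (u::real)"
  by simp
lemma t_le: "h \<le> 1 \<Longrightarrow> u \<le> 1 \<Longrightarrow> h + (1 - h) * u \<le> (1::real)"
proof -
  assume a: "h \<le> 1" "u \<le> 1"
  have "(1 - h) * u \<le> (1 - h) * 1" using a by (intro mult_left_mono) auto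
  then show ?thesis by simp
qed
lemma t_less: "h < 1 \<Longrightarrow> u < 1 \<Longrightarrow> h + (1 - h) * u < (1::real)"
proof -
  assume a: "h < 1" "u < 1"
  have "(1 - h) * u < (1 - h) * 1" using a by (intro mult_strict_left_mono) auto
  then show ?thesis by simp
qed
lemma t_mono: "h \<le> 1 \<Longrightarrow> u \<le> u' \<Longrightarrow> h + (1 - h) * u \<le> h + (1 - h) * (u'::real)"
  by (intro add_left_mono mult_left_mono) auto

context
  fixes p :: "nat \<Rightarrow> real" and h :: real
  assumes s: "(p, h) \<in> Omega"
begin

lemma p_nonneg: "0 \<le> p L" using Omega_D[OF s] by auto
lemma p_sums: "p sums 1" using Omega_D[OF s] by auto
lemma p_summable: "summable p" using p_sums by (rule sums_summable)
lemma p_sum1: "suminf p = 1" using p_sums by (simp add: sums_unique[symmetric])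
lemma h_pos: "0 < h" and h_le: "h \<le> 1" using Omega_D[OF s] by auto

lemma Fp_summ: "0 \<le> t \<Longrightarrow> t \<le> 1 \<Longrightarrow> summable (\<lambda>L. p L * t ^ L)"
  by (rule pgf2_summable[OF s])

lemma Fp_one: "Fp p 1 = 1"
  by (simp add: Fp_def p_sum1)

lemma Fp_mono: "0 \<le> t \<Longrightarrow> t \<le> t' \<Longrightarrow> t' \<le> 1 \<Longrightarrow> Fp p t \<le> Fp p t'"
  unfolding Fp_def
  by (intro suminf_le Fp_summ mult_left_mono power_mono p_nonneg) auto

lemma Fp_nonneg: "0 \<le> t \<Longrightarrow> t \<le> 1 \<Longrightarrow> 0 \<le> Fp p t"
  unfolding Fp_def by (intro suminf_nonneg Fp_summ mult_nonneg_nonneg p_nonneg zero_le_power) auto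

lemma Fp_le1: "0 \<le> t \<Longrightarrow> t \<le> 1 \<Longrightarrow> Fp p t \<le> 1"
  using Fp_mono[of t 1] Fp_one by auto

lemma Fp_cont: "0 \<le> t \<Longrightarrow> t < 1 \<Longrightarrow> isCont (Fp p) t"
  unfolding Fp_def[abs_def]
  by (rule isCont_powser[where K=1]) (use p_summable in auto)

lemma one_minus_Fp: "0 \<le> t \<Longrightarrow> t \<le> 1 \<Longrightarrow> 1 - Fp p t = (\<Sum>L. p L * (1 - t ^ L))"
proof -
  assume t: "0 \<le> t" "t \<le> 1"
  have "(\<Sum>L. p L * (1 - t ^ L)) = (\<Sum>L. p L - p L * t ^ L)"
    by (simp add: algebra_simps)
  also have "\<dots> = suminf p - (\<Sum>L. p L * t ^ L)"
    by (rule suminf_diff[symmetric]) (intro p_summable Fp_summ t)+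
  finally show ?thesis by (simp add: p_sum1 Fp_def)
qed

lemma phi_range: "0 \<le> u \<Longrightarrow> u \<le> 1 \<Longrightarrow> 0 \<le> phi (p, h) u \<and> phi (p, h) u \<le> 1"
  unfolding phi_Fp using h_pos h_le
  by (intro conjI Fp_nonneg Fp_le1 t_ge t_le) auto

lemma phi_mono: "0 \<le> u \<Longrightarrow> u \<le> u' \<Longrightarrow> u' \<le> 1 \<Longrightarrow> phi (p, h) u \<le> phi (p, h) u'"
  unfolding phi_Fp using h_pos h_le
  by (intro Fp_mono t_ge t_le t_mono) auto

end

lemma pow_le: "0 \<le> (t::real) \<Longrightarrow> t \<le> 1 \<Longrightarrow> 1 - t ^ L \<le> real L * (1 - t)"
proof (induction L)
  case (Suc L)
  have "1 - t ^ Suc L = (1 - t ^ L) + t ^ L * (1 - t)" by (simp add: algebra_simps)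
  also have "\<dots> \<le> real L * (1 - t) + 1 * (1 - t)"
    using Suc by (intro add_mono mult_right_mono power_le_one) auto
  finally show ?case by (simp add: algebra_simps)
qed simp

lemma pow_less: "0 \<le> (t::real) \<Longrightarrow> t < 1 \<Longrightarrow> 2 \<le> L \<Longrightarrow> 1 - t ^ L < real L * (1 - t)"
proof -
  assume t: "0 \<le> t" "t < 1" and L: "2 \<le> L"
  obtain n where n: "L = n + 2" using L by (metis add.commute le_Suc_ex)
  have "1 - t ^ (n + 2) < real (n + 2) * (1 - t)"
  proof (induction n)
    case 0
    have "1 - t ^ 2 = (1 - t) * (1 + t)" by (simp add: algebra_simps power2_eq_square)
    also have "\<dots> < (1 - t) * 2" using t by (intro mult_strict_left_mono) auto
    finally show ?case by (simp add: power2_eq_square algebra_simps)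
  next
    case (Suc n)
    have "1 - t ^ (Suc n + 2) = (1 - t ^ (n + 2)) + t ^ (n + 2) * (1 - t)" by (simp add: algebra_simps)
    also have "\<dots> < real (n + 2) * (1 - t) + 1 * (1 - t)"
      using Suc t by (intro add_less_le_mono mult_right_mono power_le_one) auto
    finally show ?case by (simp add: algebra_simps)
  qed
  then show ?thesis using n by simp
qed

context
  fixes p :: "nat \<Rightarrow> real" and h :: real
  assumes s: "(p, h) \<in> Omega"
begin

lemma phi_isCont: "0 \<le> u \<Longrightarrow> u < 1 \<Longrightarrow> isCont (phi (p, h)) u"
proof (cases "h = 1")
  case True
  then have "phi (p, h) = (\<lambda>_. Fp p 1)" by (simp add: fun_eq_iff phi_Fp)
  then show ?thesis by simp
next
  case False
  assume u: "0 \<le> u" "u < 1"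
  have t: "0 \<le> h + (1 - h) * u" "h + (1 - h) * u < 1"
    using h_pos[OF s] h_le[OF s] False u by (auto intro!: t_ge t_less)
  have "isCont (\<lambda>u. Fp p (h + (1 - h) * u)) u"
  proof -
    have c1: "isCont (\<lambda>u. h + (1 - h) * u) u" by (intro continuous_intros)
    show ?thesis by (rule isCont_o2[OF c1 Fp_cont[OF s t]])
  qed
  then show ?thesis by (simp add: phi_Fp[abs_def])
qed

lemma phi_gt:
  assumes crit: "mean_offspring p * ennreal (1 - h) \<le> 1" and u: "0 \<le> u" "u < 1"
  shows "u < phi (p, h) u"
proof (cases "h = 1")
  case True
  then show ?thesis using u by (simp add: phi_Fp Fp_one[OF s])
next
  case False
  note hp = h_pos[OF s] h_le[OF s]
  then have h1: "h < 1" using False by simp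
  define t where "t = h + (1 - h) * u"
  have t: "0 \<le> t" "t < 1" "1 - t = (1 - h) * (1 - u)"
    using hp h1 u unfolding t_def by (intro t_ge t_less; simp)+ (simp add: algebra_simps)
  have nt: "(\<Sum>L. ennreal (real L * p L)) \<noteq> top"
  proof
    assume "(\<Sum>L. ennreal (real L * p L)) = top"
    then have "mean_offspring p * ennreal (1 - h) = top"
      using h1 by (simp add: mean_offspring_def ennreal_top_mult)
    with crit show False by (simp add: top_unique)
  qed
  have summ: "summable (\<lambda>L. real L * p L)"
    by (rule summable_suminf_not_top[OF _ nt]) (simp add: p_nonneg[OF s])
  define m where "m = (\<Sum>L. real L * p L)"
  have "mean_offspring p = ennreal m"
    unfolding mean_offspring_def m_def by (rule suminf_ennreal2[OF _ summ]) (simp add: p_nonneg[OF s])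
  with crit have m1: "m * (1 - h) \<le> 1"
    using h1 by (simp add: ennreal_mult'[symmetric] m_def suminf_nonneg[OF summ] p_nonneg[OF s])
  have m0: "0 \<le> m" unfolding m_def by (intro suminf_nonneg summ) (simp add: p_nonneg[OF s])
  have sA: "summable (\<lambda>L. p L * (1 - t ^ L))"
  proof -
    have "summable (\<lambda>L. p L - p L * t ^ L)"
      by (intro summable_diff p_summable[OF s] Fp_summ[OF s]) (use t in auto)
    then show ?thesis by (simp add: algebra_simps)
  qed
  have sB: "summable (\<lambda>L. (real L * p L) * (1 - t))"
    by (intro summable_mult2 summ)
  have le: "p L * (1 - t ^ L) \<le> (real L * p L) * (1 - t)" for L
  proof -
    have "p L * (1 - t ^ L) \<le> p L * (real L * (1 - t))"
      using pow_le[of t L] t(1,2) p_nonneg[OF s] by (intro mult_left_mono) auto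
    then show ?thesis by (simp add: mult_ac)
  qed
  have eq1: "1 - phi (p, h) u = (\<Sum>L. p L * (1 - t ^ L))"
    unfolding phi_Fp t_def[symmetric] using t by (intro one_minus_Fp[OF s]) auto
  have eqB: "(\<Sum>L. (real L * p L) * (1 - t)) = m * (1 - t)"
    unfolding m_def by (rule suminf_mult2[symmetric, OF summ])
  have "1 - phi (p, h) u < 1 - u"
  proof (cases "\<exists>L\<ge>2. 0 < p L")
    case True
    then obtain L where L: "2 \<le> L" "0 < p L" by auto
    have "0 < (\<Sum>L. (real L * p L) * (1 - t) - p L * (1 - t ^ L))"
    proof (rule suminf_pos2)
      show "summable (\<lambda>L. (real L * p L) * (1 - t) - p L * (1 - t ^ L))"
        by (intro summable_diff sA sB)
      show "\<And>n. 0 \<le> (real n * p n) * (1 - t) - p n * (1 - t ^ n)" using le by simp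
      have "p L * (1 - t ^ L) < p L * (real L * (1 - t))"
        by (intro mult_strict_left_mono pow_less L t)
      then show "0 < (real L * p L) * (1 - t) - p L * (1 - t ^ L)" by (simp add: mult_ac)
    qed
    then have "(\<Sum>L. p L * (1 - t ^ L)) < m * (1 - t)"
      using suminf_diff[OF sB sA] eqB by simp
    also have "m * (1 - t) = (m * (1 - h)) * (1 - u)" using t by (simp add: mult_ac)
    also have "\<dots> \<le> 1 * (1 - u)" using m1 u by (intro mult_right_mono) auto
    finally show ?thesis using eq1 by simp
  next
    case False
    have z: "p L = 0" if "2 \<le> L" for L
    proof -
      from False that have "\<not> 0 < p L" by auto
      with p_nonneg[OF s, of L] show ?thesis by simp
    qed
    have "m = (\<Sum>L<2. real L * p L)"
      unfolding m_def by (rule suminf_finite) (use z in auto)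
    then have mp: "m = p 1" by (simp add: numeral_2_eq_2)
    have "p 1 \<le> (\<Sum>L<2. p L)" using p_nonneg[OF s] by (simp add: numeral_2_eq_2)
    also have "\<dots> \<le> suminf p" by (rule sum_le_suminf[OF p_summable[OF s]]) (auto simp: p_nonneg[OF s])
    finally have "m \<le> 1" using mp p_sum1[OF s] by simp
    then have "m * (1 - h) \<le> 1 * (1 - h)" using hp by (intro mult_right_mono) auto
    then have mh: "m * (1 - h) < 1" using hp by simp
    have "(\<Sum>L. p L * (1 - t ^ L)) \<le> (\<Sum>L. (real L * p L) * (1 - t))"
      by (intro suminf_le sA sB le)
    also have "\<dots> = (m * (1 - h)) * (1 - u)" using eqB t by (simp add: mult_ac)
    also have "\<dots> < 1 * (1 - u)" using mh u by (intro mult_strict_right_mono) auto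
    finally show ?thesis using eq1 by simp
  qed
  then show ?thesis by simp
qed

end

lemma phi_super:
  assumes s: "(p, h) \<in> Omega" and sup: "1 < mean_offspring p * ennreal (1 - h)"
  shows "\<exists>u0. 0 \<le> u0 \<and> u0 < 1 \<and> phi (p, h) u0 \<le> u0"
proof -
  note hp = h_pos[OF s] h_le[OF s]
  have h1: "h < 1"
  proof (rule ccontr)
    assume "\<not> h < 1" then have "h = 1" using hp by simp
    with sup show False by simp
  qed
  have "mean_offspring p * ennreal (1 - h) = (SUP n. (\<Sum>L<n. ennreal (real L * p L)) * ennreal (1 - h))"
    unfolding mean_offspring_def suminf_eq_SUP by (rule SUP_mult_right_ennreal)
  with sup obtain K where K: "1 < (\<Sum>L<K. ennreal (real L * p L)) * ennreal (1 - h)"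
    by (auto simp: less_SUP_iff)
  define A where "A = (1 - h) * (\<Sum>L<K. real L * p L)"
  have "(\<Sum>L<K. ennreal (real L * p L)) * ennreal (1 - h) = ennreal A"
    unfolding A_def using hp p_nonneg[OF s]
    by (subst sum_ennreal) (auto simp: ennreal_mult'[symmetric] mult.commute intro!: sum_nonneg)
  with K have "ennreal 1 < ennreal A" by simp
  then have A1: "1 < A" by (subst (asm) ennreal_less_iff) auto
  define t where "t u = h + (1 - h) * u" for u :: real
  define g where "g u = (1 - h) * (\<Sum>L<K. p L * (\<Sum>i<L. t u ^ i))" for u
  have "isCont g 1" unfolding g_def t_def by (intro continuous_intros)
  moreover have "g 1 = A" unfolding g_def t_def A_def by (simp add: mult_ac)
  ultimately have "(g \<longlongrightarrow> A) (at 1)" by (simp add: isCont_def)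
  then have "eventually (\<lambda>u. 1 < g u) (at 1)" using A1 by (rule order_tendstoD(1))
  then obtain d where d: "d > 0" "\<And>u. u \<noteq> 1 \<Longrightarrow> dist u 1 < d \<Longrightarrow> 1 < g u"
    by (auto simp: eventually_at)
  define u0 where "u0 = 1 - min (d / 2) 1"
  have u0: "0 \<le> u0" "u0 < 1" using d(1) by (auto simp: u0_def)
  have "dist u0 1 < d" using d(1) by (auto simp: u0_def dist_real_def)
  then have g0: "1 < g u0" using d(2) u0 by auto
  have t0: "0 \<le> t u0" "t u0 < 1" "1 - t u0 = (1 - h) * (1 - u0)"
    using hp h1 u0 unfolding t_def by (intro t_ge t_less; simp)+ (simp add: algebra_simps)
  have summ: "summable (\<lambda>L. p L * (1 - t u0 ^ L))"
  proof -
    have "summable (\<lambda>L. p L - p L * t u0 ^ L)"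
      by (intro summable_diff p_summable[OF s] Fp_summ[OF s]) (use t0 in auto)
    then show ?thesis by (simp add: algebra_simps)
  qed
  have "1 - phi (p, h) u0 = (\<Sum>L. p L * (1 - t u0 ^ L))"
    unfolding phi_Fp t_def[symmetric] using t0 by (intro one_minus_Fp[OF s]) auto
  also have "\<dots> \<ge> (\<Sum>L<K. p L * (1 - t u0 ^ L))"
  proof (rule sum_le_suminf[OF summ])
    show "0 \<le> p n * (1 - t u0 ^ n)" for n
      using p_nonneg[OF s, of n] t0 by (intro mult_nonneg_nonneg) (auto intro: power_le_one)
  qed auto
  moreover have "(\<Sum>L<K. p L * (1 - t u0 ^ L)) = (1 - u0) * g u0"
    unfolding g_def one_diff_power_eq t0(3)
    by (simp add: sum_distrib_left mult_ac)
  moreover have "(1 - u0) * 1 < (1 - u0) * g u0"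
    using g0 u0 by (intro mult_strict_left_mono) auto
  ultimately have "1 - u0 < 1 - phi (p, h) u0" by simp
  then show ?thesis using u0 by (intro exI[of _ u0]) auto
qed

type_synonym noisev = "nat \<times> nat \<times> nat \<Rightarrow> nat \<times> nat"

fun gw :: "noisev \<Rightarrow> nat \<Rightarrow> nat \<Rightarrow> nat \<Rightarrow> nat \<Rightarrow> nat" where
  "gw \<xi> x N k 0 = k"
| "gw \<xi> x N k (Suc m) = (\<Sum>j<gw \<xi> x N k m. fst (\<xi> (N + m, x, j)))"

lemma sum_coord_meas:
  fixes f :: "'b \<Rightarrow> nat" and D :: "'i \<Rightarrow> 'b pmf" and c :: "nat \<Rightarrow> 'i" and n :: nat
  shows "(\<lambda>\<xi>. \<Sum>j<n. f (\<xi> (c j))) \<in> PP D \<rightarrow>\<^sub>M count_space UNIV"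
proof (induction n)
  case 0
  then show ?case by simp
next
  case (Suc n)
  have inner: "(\<lambda>\<xi>. a + f (\<xi> (c n))) \<in> PP D \<rightarrow>\<^sub>M count_space UNIV" for a
    by (rule measurable_compose[OF coord_meas]) simp
  have "(\<lambda>\<xi>. (\<lambda>a \<xi>. a + f (\<xi> (c n))) (\<Sum>j<n. f (\<xi> (c j))) \<xi>) \<in> PP D \<rightarrow>\<^sub>M count_space UNIV"
    by (rule measurable_compose_countable[OF inner Suc.IH])
  then show ?case by simp
qed

lemma gw_meas: "(\<lambda>\<xi>. gw \<xi> x N k m) \<in> PP D \<rightarrow>\<^sub>M count_space UNIV"
proof (induction m)
  case 0
  then show ?case by simp
next
  case (Suc m)
  have "(\<lambda>\<xi>. (\<lambda>n \<xi>. \<Sum>j<n. fst (\<xi> (N + m, x, j))) (gw \<xi> x N k m) \<xi>) \<in> PP D \<rightarrow>\<^sub>M count_space UNIV"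
    by (rule measurable_compose_countable[OF sum_coord_meas Suc.IH])
  then show ?case by simp
qed

lemma nat_fun_borel: "(g :: _ \<Rightarrow> nat) \<in> M \<rightarrow>\<^sub>M count_space UNIV \<Longrightarrow> (\<lambda>x. F (g x)) \<in> borel_measurable M"
  by (rule measurable_compose[of g M "count_space UNIV"]) auto

lemma gw_dep: "dep_on {i. fst i < N + m} (\<lambda>\<xi>. gw \<xi> x N k m)"
proof (induction m)
  case 0
  then show ?case by (simp add: dep_on_def)
next
  case (Suc m)
  show ?case unfolding dep_on_def
  proof (intro allI impI)
    fix \<xi> \<xi>' :: noisev assume a: "\<forall>i\<in>{i. fst i < N + Suc m}. \<xi> i = \<xi>' i"
    then have "gw \<xi> x N k m = gw \<xi>' x N k m"
      using Suc.IH unfolding dep_on_def by auto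
    moreover have "\<xi> (N + m, x, j) = \<xi>' (N + m, x, j)" for j using a by auto
    ultimately show "gw \<xi> x N k (Suc m) = gw \<xi>' x N k (Suc m)" by simp
  qed
qed

lemma prod_coord_integral:
  fixes D :: "'i \<Rightarrow> 'b pmf" and c :: "nat \<Rightarrow> 'i" and g :: "'b \<Rightarrow> ennreal"
  assumes inj: "inj c" and Dc: "\<And>j. D (c j) = Q"
  shows "(\<integral>\<^sup>+\<xi>. (\<Prod>j<n. g (\<xi> (c j))) \<partial>PP D) = (\<integral>\<^sup>+z. g z \<partial>measure_pmf Q) ^ n"
proof (induction n)
  case 0
  then show ?case using prob_space.emeasure_space_1[OF prob_space_PP, of D] by simp
next
  case (Suc n)
  have m1: "(\<lambda>\<xi>. \<Prod>j<n. g (\<xi> (c j))) \<in> borel_measurable (PP D)"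
    by (intro borel_measurable_prod_ennreal nat_fun_borel[where g="\<lambda>\<xi>. \<xi> _"] coord_meas measurable_compose[OF coord_meas]) auto
  have m2: "(\<lambda>\<xi>. g (\<xi> (c n))) \<in> borel_measurable (PP D)"
    by (intro measurable_compose[OF coord_meas]) auto
  have d1: "dep_on (- {c n}) (\<lambda>\<xi>. \<Prod>j<n. g (\<xi> (c j)))"
    unfolding dep_on_def using inj by (auto intro!: prod.cong simp: inj_eq)
  have d2: "dep_on (- (- {c n})) (\<lambda>\<xi>. g (\<xi> (c n)))"
    unfolding dep_on_def by auto
  have "(\<integral>\<^sup>+\<xi>. (\<Prod>j<Suc n. g (\<xi> (c j))) \<partial>PP D) = (\<integral>\<^sup>+\<xi>. (\<Prod>j<n. g (\<xi> (c j))) * g (\<xi> (c n)) \<partial>PP D)"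
    by simp
  also have "\<dots> = (\<integral>\<^sup>+\<xi>. (\<Prod>j<n. g (\<xi> (c j))) \<partial>PP D) * (\<integral>\<^sup>+\<xi>. g (\<xi> (c n)) \<partial>PP D)"
    by (rule factor_nn_integral[OF m1 m2 d1 d2])
  also have "(\<integral>\<^sup>+\<xi>. g (\<xi> (c n)) \<partial>PP D) = (\<integral>\<^sup>+z. g z \<partial>measure_pmf Q)"
    using coord_nn_integral[where g=g and i="c n" and D=D] Dc by simp
  finally show ?case using Suc.IH by (simp add: mult.commute)
qed

lemma pgf1_law:
  assumes s: "s \<in> Omega" and u: "0 \<le> u" "u \<le> 1"
  shows "(\<integral>\<^sup>+z. ennreal (u ^ fst z) \<partial>particle_law s) = ennreal (phi s u)"
proof -
  obtain p h where sp: "s = (p, h)" by (cases s)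
  show ?thesis using pgf2_law[of p h u 1] s u by (simp add: sp phi_def)
qed

lemma gw_pgf:
  assumes s: "s \<in> Omega" and D: "\<And>t j. D (t, x, j) = particle_law s"
  shows "0 \<le> u \<Longrightarrow> u \<le> 1 \<Longrightarrow> (\<integral>\<^sup>+\<xi>. ennreal (u ^ gw \<xi> x N k m) \<partial>PP D) = ennreal (((phi s) ^^ m) u ^ k)"
proof (induction m arbitrary: u)
  case 0
  then show ?case using prob_space.emeasure_space_1[OF prob_space_PP, of D] by simp
next
  case (Suc m)
  obtain p h where sp: "s = (p, h)" by (cases s)
  have ph: "0 \<le> phi s u" "phi s u \<le> 1" using phi_range[of p h u] s Suc.prems by (auto simp: sp)
  define A where "A = {i :: nat \<times> nat \<times> nat. fst i < N + m}"
  have meas: "(\<lambda>\<xi>. ennreal (u ^ gw \<xi> x N k (Suc m))) \<in> borel_measurable (PP D)"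
    by (rule nat_fun_borel[OF gw_meas])
  have inner: "(\<integral>\<^sup>+b. ennreal (u ^ gw (mrg A a b) x N k (Suc m)) \<partial>PP D) = ennreal (phi s u) ^ gw a x N k m" for a
  proof -
    have g1: "gw (mrg A a b) x N k m = gw a x N k m" for b
      using dep_on_mrg1[OF gw_dep] unfolding A_def by blast
    have g2: "mrg A a b (N + m, x, j) = b (N + m, x, j)" for b j
      by (simp add: mrg_def A_def)
    have "(\<integral>\<^sup>+b. ennreal (u ^ gw (mrg A a b) x N k (Suc m)) \<partial>PP D) =
        (\<integral>\<^sup>+b. (\<Prod>j<gw a x N k m. ennreal (u ^ fst (b (N + m, x, j)))) \<partial>PP D)"
      using Suc.prems
      by (intro nn_integral_cong) (simp add: g1 g2 power_sum prod_ennreal)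
    also have "\<dots> = (\<integral>\<^sup>+z. ennreal (u ^ fst z) \<partial>measure_pmf (particle_law s)) ^ gw a x N k m"
      by (rule prod_coord_integral[where c="\<lambda>j. (N + m, x, j)"]) (auto simp: inj_def D)
    also have "\<dots> = ennreal (phi s u) ^ gw a x N k m"
      using pgf1_law[OF s Suc.prems] by simp
    finally show ?thesis .
  qed
  have "(\<integral>\<^sup>+\<xi>. ennreal (u ^ gw \<xi> x N k (Suc m)) \<partial>PP D) =
      (\<integral>\<^sup>+a. \<integral>\<^sup>+b. ennreal (u ^ gw (mrg A a b) x N k (Suc m)) \<partial>PP D \<partial>PP D)"
    by (rule split_nn_integral[OF meas])
  also have "\<dots> = (\<integral>\<^sup>+a. ennreal (phi s u) ^ gw a x N k m \<partial>PP D)"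
    by (simp only: inner)
  also have "\<dots> = (\<integral>\<^sup>+a. ennreal (phi s u ^ gw a x N k m) \<partial>PP D)"
    using ph by (simp add: ennreal_power)
  also have "\<dots> = ennreal (((phi s) ^^ m) (phi s u) ^ k)"
    by (rule Suc.IH[OF ph])
  also have "((phi s) ^^ m) (phi s u) = ((phi s) ^^ Suc m) u"
    by (simp only: funpow_Suc_right o_apply)
  finally show ?case .
qed

lemma gw_set[measurable]: "{\<xi>. P (gw \<xi> x N k m)} \<in> sets (PP D)"
  using measurable_sets[OF gw_meas[of x N k m D], of "{n. P n}"] by (simp add: vimage_def)

lemma gw_absorb: assumes "gw \<xi> x N k m = 0" and "m \<le> m'" shows "gw \<xi> x N k m' = 0"
  using assms(2)
proof (induction m' rule: dec_induct)
  case base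
  then show ?case using assms(1) by simp
next
  case (step n)
  then show ?case by simp
qed

lemma surv_set[measurable]: "{\<xi>. \<forall>m. gw \<xi> x N k m \<noteq> 0} \<in> sets (PP D)"
proof -
  have "{\<xi>. \<forall>m. gw \<xi> x N k m \<noteq> 0} = (\<Inter>m. {\<xi>. gw \<xi> x N k m \<noteq> 0})" by auto
  then show ?thesis by (auto intro!: sets.countable_INT)
qed

context
  fixes s :: site and D :: "nat \<times> nat \<times> nat \<Rightarrow> (nat \<times> nat) pmf" and x :: nat
  assumes s: "s \<in> Omega" and D: "\<And>t j. D (t, x, j) = particle_law s"
begin

lemma q_range: "0 \<le> ((phi s) ^^ m) 0 \<and> ((phi s) ^^ m) 0 \<le> 1"
proof (induction m)
  case (Suc m)
  obtain p h where sp: "s = (p, h)" by (cases s)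
  show ?case using phi_range[of p h "((phi s) ^^ m) 0"] s Suc by (simp add: sp)
qed simp

lemma q_mono: "((phi s) ^^ m) 0 \<le> ((phi s) ^^ Suc m) 0"
proof (induction m)
  case 0
  then show ?case using q_range[of 1] by simp
next
  case (Suc m)
  obtain p h where sp: "s = (p, h)" by (cases s)
  show ?case using phi_mono[of p h "((phi s) ^^ m) 0" "((phi s) ^^ Suc m) 0"] s Suc q_range[of m] q_range[of "Suc m"]
    by (simp add: sp)
qed

lemma gw_zero_measure: "measure (PP D) {\<xi>. gw \<xi> x N k m = 0} = ((phi s) ^^ m) 0 ^ k"
proof -
  have "emeasure (PP D) {\<xi>. gw \<xi> x N k m = 0} = (\<integral>\<^sup>+\<xi>. ennreal (0 ^ gw \<xi> x N k m) \<partial>PP D)"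
  proof -
    have "(\<lambda>\<xi>. ennreal (0 ^ gw \<xi> x N k m)) = indicator {\<xi>. gw \<xi> x N k m = 0}"
      by (auto simp: fun_eq_iff indicator_def)
    then show ?thesis by (simp add: nn_integral_indicator[OF gw_set])
  qed
  also have "\<dots> = ennreal (((phi s) ^^ m) 0 ^ k)"
    by (rule gw_pgf[where s=s and D=D and x=x]) (use s D in auto)
  finally show ?thesis
    using q_range[of m] by (simp add: measure_def)
qed

lemma gw_extinct:
  assumes crit: "\<And>u. 0 \<le> u \<Longrightarrow> u < 1 \<Longrightarrow> u < phi s u"
  shows "AE \<xi> in PP D. \<exists>m. gw \<xi> x N k m = 0"
proof -
  interpret P: prob_space "PP D" by (rule prob_space_PP)
  obtain p h where sp: "s = (p, h)" by (cases s)
  define q where "q m = ((phi s) ^^ m) 0" for m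
  have inc: "incseq q" unfolding q_def by (intro incseq_SucI q_mono)
  have bdd: "bdd_above (range q)" using q_range unfolding q_def by (auto intro!: bdd_aboveI)
  have lim: "q \<longlonglongrightarrow> (SUP m. q m)" by (rule LIMSEQ_incseq_SUP[OF bdd inc])
  define Q where "Q = (SUP m. q m)"
  have Q1: "Q \<le> 1" unfolding Q_def using q_range by (auto simp: q_def intro!: cSUP_least)
  have Q0: "0 \<le> Q" unfolding Q_def using q_range[of 0] bdd by (auto intro: cSUP_upper2[of _ _ 0] simp: q_def)
  have "Q = 1"
  proof (rule ccontr)
    assume "Q \<noteq> 1"
    then have Ql: "Q < 1" using Q1 by simp
    have "(\<lambda>m. phi s (q m)) \<longlonglongrightarrow> phi s Q"
      using phi_isCont[of p h Q] s Q0 Ql lim by (auto simp: sp Q_def intro: isCont_tendsto_compose)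
    moreover have "(\<lambda>m. phi s (q m)) = (\<lambda>m. q (Suc m))" by (simp add: q_def fun_eq_iff)
    moreover have "(\<lambda>m. q (Suc m)) \<longlonglongrightarrow> Q" using lim by (simp add: Q_def LIMSEQ_Suc)
    ultimately have "phi s Q = Q" using LIMSEQ_unique by auto
    with crit[OF Q0 Ql] show False by simp
  qed
  then have lim1: "(\<lambda>m. 1 - q m ^ k) \<longlonglongrightarrow> 0"
    using lim unfolding Q_def[symmetric] by (auto intro!: tendsto_eq_intros)
  define S where "S = {\<xi>. \<forall>m. gw \<xi> x N k m \<noteq> 0}"
  have Sm: "S \<in> sets (PP D)" unfolding S_def by (rule surv_set)
  have le: "measure (PP D) S \<le> 1 - q m ^ k" for m
  proof -
    have "S \<subseteq> UNIV - {\<xi>. gw \<xi> x N k m = 0}" by (simp add: S_def subset_eq)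
    moreover have "UNIV - {\<xi>. gw \<xi> x N k m = 0} \<in> sets (PP D)"
      using gw_set[of "\<lambda>n. n \<noteq> 0" x N k m D] by (simp add: set_diff_eq)
    ultimately have "measure (PP D) S \<le> measure (PP D) (UNIV - {\<xi>. gw \<xi> x N k m = 0})"
      by (intro P.finite_measure_mono) auto
    also have "\<dots> = 1 - q m ^ k"
      using P.prob_compl[of "{\<xi>. gw \<xi> x N k m = 0}"] gw_zero_measure[of N k m] by (simp add: q_def)
    finally show ?thesis .
  qed
  have "measure (PP D) S \<le> 0"
    by (rule LIMSEQ_le_const[OF lim1]) (use le in auto)
  then have "S \<in> null_sets (PP D)" using Sm by (simp add: P.emeasure_eq_measure null_sets_def measure_nonneg antisym)
  moreover have "{\<xi>\<in>space (PP D). \<not> (\<exists>m. gw \<xi> x N k m = 0)} \<subseteq> S" by (simp add: S_def subset_eq)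
  ultimately show ?thesis by (rule AE_I')
qed

lemma gw_survive:
  assumes u0: "0 \<le> u0" "u0 < 1" "phi s u0 \<le> u0"
  shows "1 - u0 \<le> measure (PP D) {\<xi>. \<forall>m. gw \<xi> x N 1 m \<noteq> 0}"
proof -
  interpret P: prob_space "PP D" by (rule prob_space_PP)
  obtain p h where sp: "s = (p, h)" by (cases s)
  have qle: "((phi s) ^^ m) 0 \<le> u0" for m
  proof (induction m)
    case (Suc m)
    have "phi s (((phi s) ^^ m) 0) \<le> phi s u0"
      using phi_mono[of p h "((phi s) ^^ m) 0" u0] s Suc q_range[of m] u0 by (simp add: sp)
    then show ?case using u0 by simp
  qed (use u0 in simp)
  define E where "E m = {\<xi>. gw \<xi> x N 1 m = 0}" for m
  have inc: "incseq E"
  proof (rule incseq_SucI)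
    fix m show "E m \<subseteq> E (Suc m)" unfolding E_def using gw_absorb[of _ x N 1 m "Suc m"] by auto
  qed
  have "(\<lambda>m. measure (PP D) (E m)) \<longlonglongrightarrow> measure (PP D) (\<Union>m. E m)"
    by (rule P.finite_Lim_measure_incseq[OF _ inc]) (auto simp: E_def)
  then have "measure (PP D) (\<Union>m. E m) \<le> u0"
    by (rule LIMSEQ_le_const2) (use qle gw_zero_measure in \<open>auto simp: E_def\<close>)
  moreover have "{\<xi>. \<forall>m. gw \<xi> x N 1 m \<noteq> 0} = UNIV - (\<Union>m. E m)" by (simp add: E_def set_eq_iff)
  moreover have "measure (PP D) (UNIV - (\<Union>m. E m)) = 1 - measure (PP D) (\<Union>m. E m)"
    using P.prob_compl[of "\<Union>m. E m"] by (auto simp: E_def)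
  ultimately show ?thesis by simp
qed

end

lemma add_meas:
  assumes "(f :: _ \<Rightarrow> nat) \<in> M \<rightarrow>\<^sub>M count_space UNIV" "g \<in> M \<rightarrow>\<^sub>M count_space UNIV"
  shows "(\<lambda>x. f x + g x) \<in> M \<rightarrow>\<^sub>M count_space UNIV"
proof -
  have "(\<lambda>x. a + g x) \<in> M \<rightarrow>\<^sub>M count_space UNIV" for a
    by (rule measurable_compose[OF assms(2)]) simp
  then have "(\<lambda>x. (\<lambda>a x. a + g x) (f x) x) \<in> M \<rightarrow>\<^sub>M count_space UNIV"
    by (rule measurable_compose_countable[OF _ assms(1)])
  then show ?thesis by simp
qed

lemma eta_meas: "(\<lambda>\<xi>. eta \<xi> n x) \<in> PP D \<rightarrow>\<^sub>M count_space UNIV"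
proof (induction n arbitrary: x)
  case 0
  then show ?case by simp
next
  case (Suc n)
  have "(\<lambda>\<xi>. (\<lambda>k \<xi>. \<Sum>j<k. fst (\<xi> (n, x, j))) (eta \<xi> n x) \<xi>) \<in> PP D \<rightarrow>\<^sub>M count_space UNIV"
    by (rule measurable_compose_countable[OF sum_coord_meas Suc.IH])
  then have A: "(\<lambda>\<xi>. \<Sum>j<eta \<xi> n x. fst (\<xi> (n, x, j))) \<in> PP D \<rightarrow>\<^sub>M count_space UNIV"
    by simp
  have B: "(\<lambda>\<xi>. if x = 0 then 0 else (\<Sum>j<eta \<xi> n (x - 1). snd (\<xi> (n, x - 1, j)))) \<in> PP D \<rightarrow>\<^sub>M count_space UNIV"
  proof (cases "x = 0")
    case False
    have "(\<lambda>\<xi>. (\<lambda>k \<xi>. \<Sum>j<k. snd (\<xi> (n, x - 1, j))) (eta \<xi> n (x - 1)) \<xi>) \<in> PP D \<rightarrow>\<^sub>M count_space UNIV"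
      by (rule measurable_compose_countable[OF sum_coord_meas Suc.IH])
    then show ?thesis using False by simp
  qed simp
  show ?case unfolding eta.simps(2) by (rule add_meas[OF A B])
qed

lemma eta_set[measurable]: "{\<xi>. P (eta \<xi> n x)} \<in> sets (PP D)"
  using measurable_sets[OF eta_meas[of n x D], of "{n. P n}"] by (simp add: vimage_def)

lemma conv_iff: "(\<lambda>n. real (f n)) \<longlonglongrightarrow> 0 \<longleftrightarrow> (\<exists>N. \<forall>n\<ge>N. f n = (0::nat))"
proof
  assume "(\<lambda>n. real (f n)) \<longlonglongrightarrow> 0"
  then have "eventually (\<lambda>n. real (f n) < 1) sequentially" by (rule order_tendstoD(2)) simp
  then show "\<exists>N. \<forall>n\<ge>N. f n = 0" by (auto simp: eventually_sequentially)
next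
  assume "\<exists>N. \<forall>n\<ge>N. f n = 0"
  then have "eventually (\<lambda>n. real (f n) = 0) sequentially" by (auto simp: eventually_sequentially)
  then show "(\<lambda>n. real (f n)) \<longlonglongrightarrow> 0" by (rule tendsto_eventually)
qed

lemma conv_set: "{\<xi> \<in> space (PP D). (\<lambda>n. real (eta \<xi> n x)) \<longlonglongrightarrow> 0} = {\<xi>. \<exists>N. \<forall>n\<ge>N. eta \<xi> n x = 0}"
  by (simp add: conv_iff)

lemma conv_set_meas: "{\<xi>. \<exists>N. \<forall>n\<ge>N. eta \<xi> n x = 0} \<in> sets (PP D)"
proof -
  have "{\<xi>. \<exists>N. \<forall>n\<ge>N. eta \<xi> n x = 0} = (\<Union>N. \<Inter>n\<in>{N..}. {\<xi>. eta \<xi> n x = 0})" by auto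
  then show ?thesis by (auto intro!: sets.countable_UN sets.countable_INT')
qed

lemma noise_PP: "noise \<omega> = PP (\<lambda>i. particle_law (\<omega> (fst (snd i))))"
  by (simp add: noise_def)

lemma eta_gw0: "eta \<xi> n 0 = gw \<xi> 0 0 1 n"
  by (induction n) auto

lemma eta_gw_after:
  assumes "\<forall>n\<ge>N. eta \<xi> n x = 0"
  shows "eta \<xi> (N + m) (Suc x) = gw \<xi> (Suc x) N (eta \<xi> N (Suc x)) m"
proof (induction m)
  case (Suc m)
  have "eta \<xi> (N + m) x = 0" using assms by simp
  then show ?case using Suc by simp
qed simp

lemma quenched_extinct:
  fixes \<omega> :: env
  assumes Om: "\<And>y. \<omega> y \<in> Omega"
    and crit: "\<And>y u. 0 \<le> u \<Longrightarrow> u < 1 \<Longrightarrow> u < phi (\<omega> y) u"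
  shows "AE \<xi> in noise \<omega>. \<exists>N. \<forall>n\<ge>N. eta \<xi> n x = 0"
proof (induction x)
  case 0
  have "AE \<xi> in noise \<omega>. \<exists>m. gw \<xi> 0 0 1 m = 0"
    unfolding noise_PP by (rule gw_extinct[OF Om]) (auto intro: crit)
  then show ?case
  proof eventually_elim
    case (elim \<xi>)
    then obtain m where "gw \<xi> 0 0 1 m = 0" by auto
    then have "\<forall>n\<ge>m. gw \<xi> 0 0 1 n = 0" using gw_absorb by blast
    then show "\<exists>N. \<forall>n\<ge>N. eta \<xi> n 0 = 0" unfolding eta_gw0 by blast
  qed
next
  case (Suc x)
  have "AE \<xi> in noise \<omega>. \<forall>N k. \<exists>m. gw \<xi> (Suc x) N k m = 0"
    unfolding AE_all_countable noise_PP
    by (intro allI gw_extinct[OF Om]) (auto intro: crit)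
  with Suc.IH show ?case
  proof (eventually_elim)
    case (elim \<xi>)
    obtain N where N: "\<forall>n\<ge>N. eta \<xi> n x = 0" using elim(1) by (elim exE)
    have "\<exists>m. gw \<xi> (Suc x) N (eta \<xi> N (Suc x)) m = 0" using elim(2) by (elim allE)
    then obtain m where m: "gw \<xi> (Suc x) N (eta \<xi> N (Suc x)) m = 0" by (elim exE)
    have "eta \<xi> n (Suc x) = 0" if "n \<ge> N + m" for n
    proof -
      define d where "d = n - (N + m)"
      have d: "n = N + (m + d)" using \<open>n \<ge> N + m\<close> unfolding d_def by simp
      have "eta \<xi> (N + (m + d)) (Suc x) = 0" unfolding eta_gw_after[OF N] by (rule gw_absorb[OF m]) simp
      then show ?thesis using d by simp
    qed
    then show ?case by (intro exI[of _ "N + m"]) simp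
  qed
qed

lemma gw_dep2: "dep_on {i. N \<le> fst i} (\<lambda>\<xi>. gw \<xi> x N k m)"
proof (induction m)
  case 0
  then show ?case by (simp add: dep_on_def)
next
  case (Suc m)
  show ?case unfolding dep_on_def
  proof (intro allI impI)
    fix \<xi> \<xi>' :: noisev assume a: "\<forall>i\<in>{i. N \<le> fst i}. \<xi> i = \<xi>' i"
    then have "gw \<xi> x N k m = gw \<xi>' x N k m"
      using Suc.IH unfolding dep_on_def by auto
    moreover have "\<xi> (N + m, x, j) = \<xi>' (N + m, x, j)" for j using a by auto
    ultimately show "gw \<xi> x N k (Suc m) = gw \<xi>' x N k (Suc m)" by simp
  qed
qed

lemma move_pos:
  assumes s: "(p, h) \<in> Omega" and p0: "p 0 < 1"
  shows "0 < measure (particle_law (p, h)) {z. snd z \<noteq> 0}"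
proof -
  note hp = h_pos[OF s] h_le[OF s]
  have "emeasure (particle_law (p, h)) {z. snd z = 0} = (\<integral>\<^sup>+z. ennreal (1 ^ fst z * 0 ^ snd z) \<partial>particle_law (p, h))"
  proof -
    have "(\<lambda>z::nat\<times>nat. ennreal (1 ^ fst z * 0 ^ snd z)) = indicator {z. snd z = 0}"
      by (auto simp: fun_eq_iff indicator_def)
    then show ?thesis by simp
  qed
  also have "\<dots> = ennreal (pgf2 (p, h) 1 0)" by (rule pgf2_law[OF s]) auto
  finally have em: "emeasure (particle_law (p, h)) {z. snd z = 0} = ennreal (pgf2 (p, h) 1 0)" .
  have e: "measure (particle_law (p, h)) {z. snd z = 0} = pgf2 (p, h) 1 0"
  proof -
    have pg0: "0 \<le> pgf2 (p, h) 1 0" using Fp_nonneg[OF s, of "1 - h"] hp by (simp add: pgf2_def Fp_def)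
    from em show ?thesis
      unfolding measure_def using pg0 by simp
  qed
  have pg: "pgf2 (p, h) 1 0 = Fp p (1 - h)" by (simp add: pgf2_def Fp_def)
  have "\<exists>L. 1 \<le> L \<and> 0 < p L"
  proof (rule ccontr)
    assume nL: "\<not> (\<exists>L. 1 \<le> L \<and> 0 < p L)"
    have z: "p L = 0" if "1 \<le> L" for L
    proof -
      from nL that have "\<not> 0 < p L" by auto
      with p_nonneg[OF s, of L] show ?thesis by simp
    qed
    have "suminf p = (\<Sum>L\<in>{0}. p L)" by (rule suminf_finite) (use z in auto)
    then show False using p0 p_sum1[OF s] by simp
  qed
  then obtain L where L: "1 \<le> L" "0 < p L" by auto
  have "0 < (\<Sum>L. p L * (1 - (1 - h) ^ L))"
  proof (rule suminf_pos2)
    have "summable (\<lambda>L. p L - p L * (1 - h) ^ L)"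
      by (intro summable_diff p_summable[OF s] Fp_summ[OF s]) (use hp in auto)
    then show "summable (\<lambda>L. p L * (1 - (1 - h) ^ L))" by (simp add: algebra_simps)
    show "0 \<le> p n * (1 - (1 - h) ^ n)" for n
      using p_nonneg[OF s, of n] hp by (intro mult_nonneg_nonneg) (auto intro: power_le_one)
    obtain L' where "L = Suc L'" using L by (cases L) auto
    then have "(1 - h) ^ L < 1" using hp power_Suc_less_one[of "1 - h" L'] by (cases "h = 1") auto
    then show "0 < p L * (1 - (1 - h) ^ L)" using L by simp
  qed
  then have "Fp p (1 - h) < 1" using one_minus_Fp[OF s, of "1 - h"] hp by simp
  then have "measure (particle_law (p, h)) {z. snd z = 0} < 1" using e pg by simp
  moreover have "measure (particle_law (p, h)) {z. snd z \<noteq> 0} = 1 - measure (particle_law (p, h)) {z. snd z = 0}"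
    using measure_pmf.prob_compl[of "{z. snd z = 0}" "particle_law (p, h)"]
    by (simp add: set_diff_eq)
  ultimately show ?thesis by simp
qed

lemma eta_diag:
  assumes E: "\<forall>y<x. snd (\<xi> (y, y, 0)) \<noteq> 0"
  shows "y \<le> x \<Longrightarrow> 1 \<le> eta \<xi> y y"
proof (induction y)
  case 0
  then show ?case by simp
next
  case (Suc y)
  then have y: "y < x" "1 \<le> eta \<xi> y y" by auto
  have "snd (\<xi> (y, y, 0)) \<le> (\<Sum>j<eta \<xi> y y. snd (\<xi> (y, y, j)))"
    using y(2) by (intro member_le_sum) auto
  also have "\<dots> \<le> eta \<xi> (Suc y) (Suc y)" by simp
  finally show ?case using E y(1) by auto
qed

lemma eta_ge_gw:
  assumes "1 \<le> eta \<xi> x x"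
  shows "gw \<xi> x x 1 m \<le> eta \<xi> (x + m) x"
proof (induction m)
  case 0
  then show ?case using assms by simp
next
  case (Suc m)
  have "gw \<xi> x x 1 (Suc m) = (\<Sum>j<gw \<xi> x x 1 m. fst (\<xi> (x + m, x, j)))" by simp
  also have "\<dots> \<le> (\<Sum>j<eta \<xi> (x + m) x. fst (\<xi> (x + m, x, j)))"
    using Suc.IH by (intro sum_mono2) auto
  also have "\<dots> \<le> eta \<xi> (Suc (x + m)) x" by (simp only: eta.simps(2))
  finally show ?case by simp
qed

lemma E1_set: "{\<xi> :: noisev. \<forall>y<(x::nat). snd (\<xi> (y, y, 0)) \<noteq> 0} \<in> sets (PP D)"
proof -
  have "{\<xi>. \<forall>y<x. snd (\<xi> (y, y, 0)) \<noteq> 0} = UNIV \<inter> (\<Inter>y\<in>{..<x}. {\<xi>. \<xi> (y, y, 0) \<in> {z. snd z \<noteq> 0}})" by auto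
  also have "\<dots> \<in> sets (PP D)"
  proof (cases "x = 0")
    case True
    then show ?thesis using sets.top[of "PP D"] by simp
  next
    case False
    have "UNIV \<in> sets (PP D)" using sets.top[of "PP D"] by simp
    moreover have "(\<Inter>y\<in>{..<x}. {\<xi>. \<xi> (y, y, 0) \<in> {z. snd z \<noteq> 0}}) \<in> sets (PP D)"
      using False by (intro sets.finite_INT coord_set) auto
    ultimately show ?thesis by (rule sets.Int)
  qed
  finally show ?thesis .
qed

lemma quenched_survive:
  fixes \<omega> :: env and x :: nat
  assumes Om: "\<And>y. y \<le> x \<Longrightarrow> \<omega> y \<in> Omega"
    and p0: "\<And>y. y < x \<Longrightarrow> fst (\<omega> y) 0 < 1"
    and u0: "0 \<le> u0" "u0 < 1" "phi (\<omega> x) u0 \<le> u0"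
  shows "measure (noise \<omega>) {\<xi> \<in> space (noise \<omega>). (\<lambda>n. real (eta \<xi> n x)) \<longlonglongrightarrow> 0} < 1"
proof -
  define D where "D = (\<lambda>i::nat\<times>nat\<times>nat. particle_law (\<omega> (fst (snd i))))"
  have nD: "noise \<omega> = PP D" unfolding D_def by (rule noise_PP)
  interpret P: product_prob_space "\<lambda>i. measure_pmf (D i)" UNIV by unfold_locales
  define E1 :: "noisev set" where "E1 = {\<xi>. \<forall>y<x. snd (\<xi> (y, y, 0)) \<noteq> 0}"
  define S :: "noisev set" where "S = {\<xi>. \<forall>m. gw \<xi> x x 1 m \<noteq> 0}"
  have E1m: "E1 \<in> sets (PP D)" unfolding E1_def by (rule E1_set)
  have Sm: "S \<in> sets (PP D)" unfolding S_def by (rule surv_set)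
  define J where "J = (\<lambda>y. (y, y, 0::nat)) ` {..<x}"
  have "emeasure (PP D) {\<xi>\<in>space (PP D). \<forall>i\<in>J. \<xi> i \<in> {z. snd z \<noteq> 0}} = (\<Prod>i\<in>J. emeasure (measure_pmf (D i)) {z. snd z \<noteq> 0})"
    by (rule P.emeasure_PiM_Collect) (auto simp: J_def)
  moreover have "{\<xi>\<in>space (PP D). \<forall>i\<in>J. \<xi> i \<in> {z. snd z \<noteq> 0}} = E1" by (auto simp: J_def E1_def)
  moreover have "(\<Prod>i\<in>J. emeasure (measure_pmf (D i)) {z. snd z \<noteq> 0}) = (\<Prod>y<x. emeasure (measure_pmf (particle_law (\<omega> y))) {z. snd z \<noteq> 0})"
    unfolding J_def by (subst prod.reindex) (auto simp: inj_on_def D_def)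
  moreover have "\<dots> = ennreal (\<Prod>y<x. measure (particle_law (\<omega> y)) {z. snd z \<noteq> 0})"
    by (simp add: measure_pmf.emeasure_eq_measure prod_ennreal)
  moreover have "0 < (\<Prod>y<x. measure (particle_law (\<omega> y)) {z. snd z \<noteq> 0})"
  proof (rule prod_pos)
    fix y assume "y \<in> {..<x}"
    then have y: "y < x" by simp
    obtain p h where ph: "\<omega> y = (p, h)" by (cases "\<omega> y")
    show "0 < measure (particle_law (\<omega> y)) {z. snd z \<noteq> 0}"
      using move_pos[of p h] Om[of y] p0[OF y] y by (simp add: ph)
  qed
  ultimately have E1pos: "0 < emeasure (PP D) E1" by simp
  have "1 - u0 \<le> measure (PP D) S"
    unfolding S_def by (rule gw_survive[where s="\<omega> x"]) (use Om u0 in \<open>auto simp: D_def\<close>)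
  then have Spos: "0 < emeasure (PP D) S"
    using u0 by (simp add: P.emeasure_eq_measure)
  have "emeasure (PP D) (E1 \<inter> S) = (\<integral>\<^sup>+\<xi>. indicator E1 \<xi> * indicator S \<xi> \<partial>PP D)"
  proof -
    have "(\<lambda>\<xi>. indicator E1 \<xi> * indicator S \<xi> :: ennreal) = indicator (E1 \<inter> S)"
      by (auto simp: fun_eq_iff indicator_def)
    then show ?thesis using nn_integral_indicator[OF sets.Int[OF E1m Sm]] by simp
  qed
  also have "\<dots> = (\<integral>\<^sup>+\<xi>. indicator E1 \<xi> \<partial>PP D) * (\<integral>\<^sup>+\<xi>. indicator S \<xi> \<partial>PP D)"
  proof (rule factor_nn_integral[where A="{i. fst i < x}"])
    show "(indicator E1 :: _ \<Rightarrow> ennreal) \<in> borel_measurable (PP D)" using E1m by simp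
    show "(indicator S :: _ \<Rightarrow> ennreal) \<in> borel_measurable (PP D)" using Sm by simp
    show "dep_on {i. fst i < x} (indicator E1 :: _ \<Rightarrow> ennreal)"
      unfolding dep_on_def E1_def indicator_def by auto
    have "dep_on {i. x \<le> fst i} (\<lambda>\<xi>. gw \<xi> x x 1 m)" for m by (rule gw_dep2)
    then have gwd: "\<And>\<xi> \<xi>' m. (\<forall>i\<in>{i. x \<le> fst i}. \<xi> i = \<xi>' i) \<Longrightarrow> gw \<xi> x x 1 m = gw \<xi>' x x 1 m"
      unfolding dep_on_def by blast
    have "dep_on {i. x \<le> fst i} (indicator S :: _ \<Rightarrow> ennreal)"
      unfolding dep_on_def
    proof (intro allI impI)
      fix \<xi> \<xi>' :: noisev assume a: "\<forall>i\<in>{i. x \<le> fst i}. \<xi> i = \<xi>' i"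
      have "(\<xi> \<in> S) = (\<xi>' \<in> S)" unfolding S_def mem_Collect_eq using gwd[OF a] by simp
      then show "(indicator S \<xi> :: ennreal) = indicator S \<xi>'" by (simp add: indicator_def)
    qed
    moreover have "- {i :: nat \<times> nat \<times> nat. fst i < x} = {i. x \<le> fst i}" by auto
    ultimately show "dep_on (- {i. fst i < x}) (indicator S :: _ \<Rightarrow> ennreal)" by simp
  qed
  also have "\<dots> = emeasure (PP D) E1 * emeasure (PP D) S"
    using nn_integral_indicator[OF E1m] nn_integral_indicator[OF Sm] by simp
  finally have "0 < emeasure (PP D) (E1 \<inter> S)" using E1pos Spos by (simp add: ennreal_zero_less_mult_iff)
  then have pos: "0 < measure (PP D) (E1 \<inter> S)" by (simp add: P.emeasure_eq_measure)
  have sub: "{\<xi>. \<exists>N. \<forall>n\<ge>N. eta \<xi> n x = 0} \<subseteq> UNIV - (E1 \<inter> S)"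
  proof safe
    fix \<xi> N assume N: "\<forall>n\<ge>N. eta \<xi> n x = 0" and "\<xi> \<in> E1" "\<xi> \<in> S"
    then have "1 \<le> eta \<xi> x x" using eta_diag[of x \<xi> x] by (auto simp: E1_def)
    then have "gw \<xi> x x 1 N \<le> eta \<xi> (x + N) x" by (rule eta_ge_gw)
    moreover have "eta \<xi> (x + N) x = 0" using N by simp
    moreover have "gw \<xi> x x 1 N \<noteq> 0" using \<open>\<xi> \<in> S\<close> by (simp add: S_def)
    ultimately show False by simp
  qed simp
  have "measure (PP D) {\<xi>. \<exists>N. \<forall>n\<ge>N. eta \<xi> n x = 0} \<le> measure (PP D) (UNIV - (E1 \<inter> S))"
    using sub sets.compl_sets[OF sets.Int[OF E1m Sm]] by (intro P.finite_measure_mono) auto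
  also have "\<dots> = 1 - measure (PP D) (E1 \<inter> S)"
    using P.prob_compl[of "E1 \<inter> S"] E1m Sm by auto
  finally have m: "measure (PP D) {\<xi>. \<exists>N. \<forall>n\<ge>N. eta \<xi> n x = 0} < 1" using pos by linarith
  have eqs: "{\<xi> \<in> space (noise \<omega>). (\<lambda>n. real (eta \<xi> n x)) \<longlonglongrightarrow> 0} = {\<xi>. \<exists>N. \<forall>n\<ge>N. eta \<xi> n x = 0}"
    unfolding nD by (rule conv_set)
  show ?thesis unfolding eqs unfolding nD by (rule m)
qed

lemma meas_coord[measurable]: "(\<lambda>x::site. fst x k) \<in> borel_measurable borel"
proof -
  have "continuous_on UNIV (\<lambda>x::site. fst x k)"
    using continuous_on_compose2[OF continuous_on_product_coordinates[of k] continuous_on_fst[OF continuous_on_id]]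
    by auto
  then show ?thesis by (intro borel_measurable_continuous_onI)
qed

lemma meas_snd[measurable]: "(\<lambda>x::site. snd x) \<in> borel_measurable borel"
  by (intro borel_measurable_continuous_onI continuous_on_snd continuous_on_id)

lemma f_meas_borel: "(\<lambda>(p, h). mean_offspring p * ennreal (1 - h)) \<in> borel_measurable (borel :: site measure)"
  unfolding mean_offspring_def
  by (simp add: case_prod_beta) measurable

lemma quenched_no_LS:
  assumes Om: "\<And>y. \<omega> y \<in> Omega"
    and crit: "\<And>y. (case \<omega> y of (p, h) \<Rightarrow> mean_offspring p * ennreal (1 - h)) \<le> 1"
  shows "\<not> local_survival \<omega>"
proof -
  have c: "u < phi (\<omega> y) u" if "0 \<le> u" "u < 1" for y u
  proof -
    obtain p h where ph: "\<omega> y = (p, h)" by (cases "\<omega> y")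
    show ?thesis using phi_gt[of p h u] Om[of y] crit[of y] that by (simp add: ph)
  qed
  have "measure (noise \<omega>) {\<xi> \<in> space (noise \<omega>). (\<lambda>n. real (eta \<xi> n x)) \<longlonglongrightarrow> 0} = 1" for x
  proof -
    define D where "D = (\<lambda>i::nat\<times>nat\<times>nat. particle_law (\<omega> (fst (snd i))))"
    have nD: "noise \<omega> = PP D" unfolding D_def by (rule noise_PP)
    interpret P: prob_space "PP D" by (rule prob_space_PP)
    have eqs: "{\<xi> \<in> space (noise \<omega>). (\<lambda>n. real (eta \<xi> n x)) \<longlonglongrightarrow> 0} = {\<xi>. \<exists>N. \<forall>n\<ge>N. eta \<xi> n x = 0}"
      unfolding nD by (rule conv_set)
    have "AE \<xi> in noise \<omega>. \<exists>N. \<forall>n\<ge>N. eta \<xi> n x = 0"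
      by (rule quenched_extinct) (use Om c in auto)
    then have ae: "AE \<xi> in PP D. \<xi> \<in> {\<xi>. \<exists>N. \<forall>n\<ge>N. eta \<xi> n x = 0}"
      unfolding nD by simp
    have "measure (PP D) {\<xi>. \<exists>N. \<forall>n\<ge>N. eta \<xi> n x = 0} = 1"
      using P.AE_in_set_eq_1[OF conv_set_meas] ae by simp
    then show ?thesis unfolding eqs unfolding nD .
  qed
  then show ?thesis unfolding local_survival_def by simp
qed

lemma quenched_LS:
  assumes Om: "\<And>y. \<omega> y \<in> Omega" and p0: "\<And>y. fst (\<omega> y) 0 < 1"
    and sup: "1 < (case \<omega> x of (p, h) \<Rightarrow> mean_offspring p * ennreal (1 - h))"
  shows "local_survival \<omega>"
proof -
  obtain p h where ph: "\<omega> x = (p, h)" by (cases "\<omega> x")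
  obtain u0 where u0: "0 \<le> u0" "u0 < 1" "phi (p, h) u0 \<le> u0"
    using phi_super[of p h] Om[of x] sup by (auto simp: ph)
  have "measure (noise \<omega>) {\<xi> \<in> space (noise \<omega>). (\<lambda>n. real (eta \<xi> n x)) \<longlonglongrightarrow> 0} < 1"
    by (rule quenched_survive[of x \<omega> u0]) (use Om p0 u0 ph in auto)
  then show ?thesis unfolding local_survival_def by blast
qed

theorem theorem1:
  fixes \<alpha> :: "site measure" and \<delta> :: real
  assumes "prob_space \<alpha>"
    and "sets \<alpha> = sets borel"
    and "emeasure \<alpha> Omega = 1"
    and "\<delta> > 0"
    and "emeasure \<alpha> {(p, h) \<in> Omega. p 1 = 1} < 1"
    and "emeasure \<alpha> {(p, h) \<in> Omega. p 0 \<le> 1 - \<delta> \<and> \<delta> \<le> h \<and> h \<le> 1} = 1"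
  shows "((AE \<omega> in env_law \<alpha>. local_survival \<omega>) \<or> (AE \<omega> in env_law \<alpha>. \<not> local_survival \<omega>))
    \<and> ((AE \<omega> in env_law \<alpha>. local_survival \<omega>) \<longleftrightarrow> Lambda \<alpha> > 1)"
proof -
  interpret A: prob_space \<alpha> by (rule assms(1))
  interpret E: product_prob_space "\<lambda>_. \<alpha>" "UNIV :: nat set" by unfold_locales
  have envP: "env_law \<alpha> = PiM UNIV (\<lambda>_. \<alpha>)" by (simp add: env_law_def)
  interpret EP: prob_space "env_law \<alpha>" unfolding envP by (rule E.P.prob_space_axioms)
  have spA: "space \<alpha> = UNIV" using sets_eq_imp_space_eq[OF assms(2)] by simp
  define f where "f = (\<lambda>(p, h). mean_offspring p * ennreal (1 - h))"
  have fm: "f \<in> borel_measurable \<alpha>"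
    unfolding f_def using f_meas_borel by (subst measurable_cong_sets[OF assms(2) refl])
  define G where "G = {(p, h) \<in> Omega. p 0 \<le> 1 - \<delta> \<and> \<delta> \<le> h \<and> h \<le> 1}"
  have Gm: "G \<in> sets \<alpha>" using assms(6) emeasure_notin_sets unfolding G_def by fastforce
  have "A.prob G = 1" using assms(6) Gm unfolding G_def by (simp add: A.emeasure_eq_measure)
  then have aeG: "AE s in \<alpha>. s \<in> G" using A.AE_in_set_eq_1[OF Gm] by simp
  have aeG': "AE \<omega> in env_law \<alpha>. \<forall>y. \<omega> y \<in> G"
    unfolding envP AE_all_countable by (intro allI E.AE_component aeG) simp
  have Gprops: "s \<in> Omega" "fst s 0 < 1" if "s \<in> G" for s
    using that assms(4) unfolding G_def by auto
  show ?thesis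
  proof (cases "Lambda \<alpha> > 1")
    case False
    then have L1: "Lambda \<alpha> \<le> 1" by simp
    have "AE s in \<alpha>. f s \<le> Lambda \<alpha>"
      unfolding Lambda_def f_def by (rule esssup_AE)
    then have "AE s in \<alpha>. f s \<le> 1"
    proof eventually_elim
      case (elim s)
      show ?case using elim L1 by (rule order.trans)
    qed
    then have aef: "AE \<omega> in env_law \<alpha>. \<forall>y. f (\<omega> y) \<le> 1"
      unfolding envP AE_all_countable by (intro allI E.AE_component) simp_all
    have aeN: "AE \<omega> in env_law \<alpha>. \<not> local_survival \<omega>"
      using aeG' aef
    proof eventually_elim
      case (elim \<omega>)
      show ?case by (rule quenched_no_LS) (use elim Gprops in \<open>auto simp: f_def\<close>)
    qed
    have "\<not> (AE \<omega> in env_law \<alpha>. local_survival \<omega>)"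
    proof
      assume "AE \<omega> in env_law \<alpha>. local_survival \<omega>"
      with aeN have "AE \<omega> in env_law \<alpha>. False" by eventually_elim simp
      then show False by simp
    qed
    then show ?thesis using aeN False by simp
  next
    case True
    define B where "B = {s \<in> space \<alpha>. 1 < f s}"
    have Bm: "B \<in> sets \<alpha>" unfolding B_def using fm by measurable
    have "0 < emeasure \<alpha> B"
      unfolding B_def using esssup_pos_measure[OF fm, of 1] True by (simp add: Lambda_def f_def)
    then have Bpos: "0 < A.prob B" by (simp add: A.emeasure_eq_measure)
    define Nn where "Nn n = {\<omega> \<in> space (PiM UNIV (\<lambda>_. \<alpha>)). \<forall>y\<in>{..<n}. \<omega> y \<in> space \<alpha> - B}" for n :: nat
    have Nm: "Nn n \<in> sets (PiM UNIV (\<lambda>_. \<alpha>))" for n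
      unfolding Nn_def using Bm by (intro sets.sets_Collect_finite_All) auto
    have Nmeas: "measure (PiM UNIV (\<lambda>_. \<alpha>)) (Nn n) = (1 - A.prob B) ^ n" for n
    proof -
      have "emeasure (PiM UNIV (\<lambda>_. \<alpha>)) (Nn n) = (\<Prod>y\<in>{..<n}. emeasure \<alpha> (space \<alpha> - B))"
        unfolding Nn_def using Bm by (intro E.emeasure_PiM_Collect) auto
      also have "\<dots> = ennreal ((1 - A.prob B) ^ n)"
        using Bm by (simp add: A.emeasure_eq_measure A.prob_compl prod_ennreal[symmetric] ennreal_power)
      finally show ?thesis using A.prob_le_1[of B] by (simp add: E.P.emeasure_eq_measure)
    qed
    define N where "N = {\<omega> :: env. \<forall>y. \<omega> y \<notin> B}"
    have NN: "N \<subseteq> Nn n" for n unfolding N_def Nn_def B_def by (auto simp: space_PiM spA)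
    have Nm2: "N \<in> sets (PiM UNIV (\<lambda>_. \<alpha>))"
    proof -
      have "N = (\<Inter>n. Nn n)" unfolding N_def Nn_def B_def by (auto simp: space_PiM spA)
      then show ?thesis using Nm by auto
    qed
    have "(\<lambda>n. (1 - A.prob B) ^ n) \<longlonglongrightarrow> 0"
      using Bpos A.prob_le_1[of B] by (intro LIMSEQ_power_zero) auto
    moreover have "measure (PiM UNIV (\<lambda>_. \<alpha>)) N \<le> (1 - A.prob B) ^ n" for n
      using E.P.finite_measure_mono[OF NN Nm, of n] Nmeas by simp
    ultimately have "measure (PiM UNIV (\<lambda>_. \<alpha>)) N \<le> 0"
      by (intro LIMSEQ_le_const) auto
    then have Nnull: "N \<in> null_sets (PiM UNIV (\<lambda>_. \<alpha>))"
      using Nm2 by (simp add: E.P.emeasure_eq_measure null_sets_def measure_nonneg antisym)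
    have aeB: "AE \<omega> in env_law \<alpha>. \<exists>y. \<omega> y \<in> B"
      unfolding envP by (rule AE_I'[OF Nnull]) (auto simp: N_def)
    have aeL: "AE \<omega> in env_law \<alpha>. local_survival \<omega>"
      using aeG' aeB
    proof eventually_elim
      case (elim \<omega>)
      then obtain x where x: "\<omega> x \<in> B" by auto
      show ?case
        by (rule quenched_LS[of _ x]) (use elim Gprops x in \<open>auto simp: B_def f_def\<close>)
    qed
    then show ?thesis using True by simp
  qed
qed

end
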